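(* For $n\ge1$, $m(W_n)=\frac{(n-1)n(n+1)}{6}$ and $m(M_n)=0$; moreover $\frac{(n-1)n(n+1)}{6}$ equals the number of meet-irreducible elements of $(\mathcal{Q}_n,\le)$.
   Context: $L_n=\{0,\dots,n\}$. For a map $Q:L_n\times L_n\to\mathbb{R}$ write $|Q|=\sum_{i,j=1}^{n}Q(i,j)$. $M_n(i,j)=\min\{i,j\}$ and $W_n(i,j)=\max\{i+j-n,0\}$, and $m(Q)=|M_n|-|Q|$. $\mathcal{Q}_n$ is the set of irreducible discrete quasi-copulas: maps $Q:L_n\times L_n\to L_n$ (onto) with $Q(i,0)=Q(0,i)=0$, $Q(i,n)=Q(n,i)=i$, non-decreasing in each argument, and $Q(i,j)+Q(i',j')\ge Q(i,j')+Q(i',j)$ whenever $i\le i'$, $j\le j'$ and one of $i,i',j,j'$ lies in $\{0,n\}$; ordered by $P\le Q$ iff $P(i,j)\le Q(i,j)$ for all $i,j$. An element $z$ of a finite poset is meet-irreducible if it is not the maximum and $z=x\wedge y$ implies $z=x$ or $z=y$. *)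

theory Defs
  imports Main
begin

definition Ln :: "nat \<Rightarrow> nat set" where "Ln n = {0..n}"

definition Mn :: "nat \<Rightarrow> nat \<Rightarrow> nat \<Rightarrow> nat" where "Mn n i j = min i j"

(* nat subtraction truncates: (i + j) - n = max (i + j - n) 0 *)
definition Wn :: "nat \<Rightarrow> nat \<Rightarrow> nat \<Rightarrow> nat" where "Wn n i j = (i + j) - n"

definition qnorm :: "nat \<Rightarrow> (nat \<Rightarrow> nat \<Rightarrow> nat) \<Rightarrow> int" where
  "qnorm n Q = (\<Sum>i=1..n. \<Sum>j=1..n. int (Q i j))"

definition mq :: "nat \<Rightarrow> (nat \<Rightarrow> nat \<Rightarrow> nat) \<Rightarrow> int" where
  "mq n Q = qnorm n (Mn n) - qnorm n Q"

(* maps L_n x L_n -> L_n, represented as functions on nat, extended by 0 outside L_n x L_n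
   so that distinct maps on L_n x L_n correspond to distinct representatives *)
definition IDQC :: "nat \<Rightarrow> (nat \<Rightarrow> nat \<Rightarrow> nat) set" where
  "IDQC n = {Q.
     (\<forall>i j. (i > n \<or> j > n) \<longrightarrow> Q i j = 0) \<and>
     (\<lambda>(i,j). Q i j) ` (Ln n \<times> Ln n) = Ln n \<and>
     (\<forall>i\<in>Ln n. Q i 0 = 0 \<and> Q 0 i = 0 \<and> Q i n = i \<and> Q n i = i) \<and>
     (\<forall>i\<in>Ln n. \<forall>i'\<in>Ln n. \<forall>j\<in>Ln n. i \<le> i' \<longrightarrow> Q i j \<le> Q i' j) \<and>
     (\<forall>i\<in>Ln n. \<forall>j\<in>Ln n. \<forall>j'\<in>Ln n. j \<le> j' \<longrightarrow> Q i j \<le> Q i j') \<and>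
     (\<forall>i\<in>Ln n. \<forall>i'\<in>Ln n. \<forall>j\<in>Ln n. \<forall>j'\<in>Ln n.
        i \<le> i' \<and> j \<le> j' \<and> ({i, i', j, j'} \<inter> {0, n} \<noteq> {}) \<longrightarrow>
        Q i j + Q i' j' \<ge> Q i j' + Q i' j)}"

definition qle :: "nat \<Rightarrow> (nat \<Rightarrow> nat \<Rightarrow> nat) \<Rightarrow> (nat \<Rightarrow> nat \<Rightarrow> nat) \<Rightarrow> bool" where
  "qle n P Q = (\<forall>i\<in>Ln n. \<forall>j\<in>Ln n. P i j \<le> Q i j)"

definition is_meet :: "nat \<Rightarrow> (nat \<Rightarrow> nat \<Rightarrow> nat) \<Rightarrow> (nat \<Rightarrow> nat \<Rightarrow> nat) \<Rightarrow> (nat \<Rightarrow> nat \<Rightarrow> nat) \<Rightarrow> bool" where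
  "is_meet n z x y = (z \<in> IDQC n \<and> qle n z x \<and> qle n z y \<and>
     (\<forall>w\<in>IDQC n. qle n w x \<and> qle n w y \<longrightarrow> qle n w z))"

definition meet_irreducible :: "nat \<Rightarrow> (nat \<Rightarrow> nat \<Rightarrow> nat) \<Rightarrow> bool" where
  "meet_irreducible n z = (z \<in> IDQC n \<and>
     \<not> (\<forall>x\<in>IDQC n. qle n x z) \<and>
     (\<forall>x\<in>IDQC n. \<forall>y\<in>IDQC n. is_meet n z x y \<longrightarrow> z = x \<or> z = y))"

end

theory Submission
  imports Defs
begin


lemma IDQC_intro:
  assumes z: "\<And>i j. i > n \<or> j > n \<Longrightarrow> Q i j = 0"
  and b: "\<And>i. i \<le> n \<Longrightarrow> Q i 0 = 0 \<and> Q 0 i = 0 \<and> Q i n = i \<and> Q n i = i"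
  and mi: "\<And>i i' j. i \<le> i' \<Longrightarrow> i' \<le> n \<Longrightarrow> j \<le> n \<Longrightarrow> Q i j \<le> Q i' j \<and> Q i' j \<le> Q i j + (i'-i)"
  and mj: "\<And>i j j'. j \<le> j' \<Longrightarrow> j' \<le> n \<Longrightarrow> i \<le> n \<Longrightarrow> Q i j \<le> Q i j' \<and> Q i j' \<le> Q i j + (j'-j)"
  shows "Q \<in> IDQC n"
proof -
  have img: "(\<lambda>(i,j). Q i j) ` (Ln n \<times> Ln n) = Ln n"
  proof
    show "(\<lambda>(i,j). Q i j) ` (Ln n \<times> Ln n) \<subseteq> Ln n"
    proof clarsimp
      fix i j assume "i \<in> Ln n" "j \<in> Ln n"
      hence h: "i \<le> n" "j \<le> n" by (auto simp: Ln_def)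
      hence "Q i j \<le> Q i n" "Q i n = i" using mj[of j n i] b[of i] by auto
      thus "Q i j \<in> Ln n" using h by (auto simp: Ln_def)
    qed
    show "Ln n \<subseteq> (\<lambda>(i,j). Q i j) ` (Ln n \<times> Ln n)"
    proof
      fix k assume k: "k \<in> Ln n"
      hence "k = (\<lambda>(i,j). Q i j) (n,k)" using b by (auto simp: Ln_def)
      moreover have "(n,k) \<in> Ln n \<times> Ln n" using k by (auto simp: Ln_def)
      ultimately show "k \<in> (\<lambda>(i,j). Q i j) ` (Ln n \<times> Ln n)" by blast
    qed
  qed
  have sq: "Q i j + Q i' j' \<ge> Q i j' + Q i' j"
    if h: "i \<le> i'" "j \<le> j'" "i' \<le> n" "j' \<le> n" "{i, i', j, j'} \<inter> {0, n} \<noteq> {}" for i i' j j'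
  proof -
    have "i = 0 \<or> i' = 0 \<or> j = 0 \<or> j' = 0 \<or> i = n \<or> i' = n \<or> j = n \<or> j' = n" using h(5) by auto
    moreover
    { assume "i = 0" hence ?thesis using b[of j] b[of j'] mj[of j j' i'] h by auto }
    moreover
    { assume "i' = 0" hence ?thesis using b[of j] b[of j'] mj[of j j' i'] h by auto }
    moreover
    { assume "j = 0" hence ?thesis using b[of i] b[of i'] mi[of i i' j'] h by auto }
    moreover
    { assume "j' = 0" hence ?thesis using b[of i] b[of i'] mi[of i i' j'] h by auto }
    moreover
    { assume "i = n" hence ?thesis using h by auto }
    moreover
    { assume "j = n" hence ?thesis using h by auto }
    moreover
    { assume "i' = n" hence ?thesis using b[of j] b[of j'] mj[of j j' i] h by auto }
    moreover
    { assume "j' = n" hence ?thesis using b[of i] b[of i'] mi[of i i' j] h by auto }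
    ultimately show ?thesis by blast
  qed
  have p1: "\<forall>i j. (i > n \<or> j > n) \<longrightarrow> Q i j = 0" using z by blast
  have p3: "\<forall>i\<in>Ln n. Q i 0 = 0 \<and> Q 0 i = 0 \<and> Q i n = i \<and> Q n i = i" using b by (simp add: Ln_def)
  have p4: "\<forall>i\<in>Ln n. \<forall>i'\<in>Ln n. \<forall>j\<in>Ln n. i \<le> i' \<longrightarrow> Q i j \<le> Q i' j" using mi by (simp add: Ln_def)
  have p5: "\<forall>i\<in>Ln n. \<forall>j\<in>Ln n. \<forall>j'\<in>Ln n. j \<le> j' \<longrightarrow> Q i j \<le> Q i j'" using mj by (simp add: Ln_def)
  have p6: "\<forall>i\<in>Ln n. \<forall>i'\<in>Ln n. \<forall>j\<in>Ln n. \<forall>j'\<in>Ln n.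
        i \<le> i' \<and> j \<le> j' \<and> ({i, i', j, j'} \<inter> {0, n} \<noteq> {}) \<longrightarrow>
        Q i j + Q i' j' \<ge> Q i j' + Q i' j" using sq by (simp add: Ln_def)
  show ?thesis unfolding IDQC_def mem_Collect_eq using p1 img p3 p4 p5 p6 by blast
qed

lemma IDQC_D:
  assumes "Q \<in> IDQC n"
  shows IDQC_zero: "\<And>i j. i > n \<or> j > n \<Longrightarrow> Q i j = 0"
  and IDQC_bd: "\<And>i. i \<le> n \<Longrightarrow> Q i 0 = 0 \<and> Q 0 i = 0 \<and> Q i n = i \<and> Q n i = i"
  and IDQC_mi: "\<And>i i' j. i \<le> i' \<Longrightarrow> i' \<le> n \<Longrightarrow> j \<le> n \<Longrightarrow> Q i j \<le> Q i' j \<and> Q i' j \<le> Q i j + (i'-i)"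
  and IDQC_mj: "\<And>i j j'. j \<le> j' \<Longrightarrow> j' \<le> n \<Longrightarrow> i \<le> n \<Longrightarrow> Q i j \<le> Q i j' \<and> Q i j' \<le> Q i j + (j'-j)"
proof -
  note D = assms[unfolded IDQC_def mem_Collect_eq]
  note p1 = D[THEN conjunct1]
  note p3 = D[THEN conjunct2, THEN conjunct2, THEN conjunct1]
  note p4 = D[THEN conjunct2, THEN conjunct2, THEN conjunct2, THEN conjunct1]
  note p5 = D[THEN conjunct2, THEN conjunct2, THEN conjunct2, THEN conjunct2, THEN conjunct1]
  note p6 = D[THEN conjunct2, THEN conjunct2, THEN conjunct2, THEN conjunct2, THEN conjunct2]
  show "\<And>i j. i > n \<or> j > n \<Longrightarrow> Q i j = 0" using p1 by blast
  show "\<And>i. i \<le> n \<Longrightarrow> Q i 0 = 0 \<and> Q 0 i = 0 \<and> Q i n = i \<and> Q n i = i" using p3 by (simp add: Ln_def)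
  show "\<And>i i' j. i \<le> i' \<Longrightarrow> i' \<le> n \<Longrightarrow> j \<le> n \<Longrightarrow> Q i j \<le> Q i' j \<and> Q i' j \<le> Q i j + (i'-i)"
  proof -
    fix i i' j assume h: "i \<le> i'" "i' \<le> n" "j \<le> n"
    have L: "i \<in> Ln n" "i' \<in> Ln n" "j \<in> Ln n" "n \<in> Ln n" using h by (auto simp: Ln_def)
    have "Q i j \<le> Q i' j" using p4[rule_format, OF L(1) L(2) L(3) h(1)] .
    moreover have "{i, i', j, n} \<inter> {0, n} \<noteq> {}" by blast
    hence "Q i j + Q i' n \<ge> Q i n + Q i' j" using p6[rule_format, OF L(1) L(2) L(3) L(4)] h by blast
    moreover have "Q i' n = i'" "Q i n = i" using p3 L by auto
    ultimately show "Q i j \<le> Q i' j \<and> Q i' j \<le> Q i j + (i'-i)" using h by auto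
  qed
  show "\<And>i j j'. j \<le> j' \<Longrightarrow> j' \<le> n \<Longrightarrow> i \<le> n \<Longrightarrow> Q i j \<le> Q i j' \<and> Q i j' \<le> Q i j + (j'-j)"
  proof -
    fix i j j' assume h: "j \<le> j'" "j' \<le> n" "i \<le> n"
    have L: "i \<in> Ln n" "j' \<in> Ln n" "j \<in> Ln n" "n \<in> Ln n" using h by (auto simp: Ln_def)
    have "Q i j \<le> Q i j'" using p5[rule_format, OF L(1) L(3) L(2) h(1)] .
    moreover have "{i, n, j, j'} \<inter> {0, n} \<noteq> {}" by blast
    hence "Q i j + Q n j' \<ge> Q i j' + Q n j" using p6[rule_format, OF L(1) L(4) L(3) L(2)] h by blast
    moreover have "Q n j' = j'" "Q n j = j" using p3 L by auto
    ultimately show "Q i j \<le> Q i j' \<and> Q i j' \<le> Q i j + (j'-j)" using h by auto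
  qed
qed




definition topf :: "nat \<Rightarrow> nat \<Rightarrow> nat \<Rightarrow> nat" where
  "topf n i j = (if i \<le> n \<and> j \<le> n then min i j else 0)"
definition Uf :: "nat \<Rightarrow> nat \<Rightarrow> nat \<Rightarrow> nat \<Rightarrow> nat \<Rightarrow> nat \<Rightarrow> nat" where
  "Uf n a b v i j = (if i \<le> n \<and> j \<le> n then min i (min j (v + (i - a) + (j - b))) else 0)"
definition pmin :: "(nat \<Rightarrow> nat \<Rightarrow> nat) \<Rightarrow> (nat \<Rightarrow> nat \<Rightarrow> nat) \<Rightarrow> nat \<Rightarrow> nat \<Rightarrow> nat" where
  "pmin x y i j = min (x i j) (y i j)"

lemma Uf_mem: assumes "a + b \<le> v + n" shows "Uf n a b v \<in> IDQC n"
proof (rule IDQC_intro)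
  show "\<And>i j. n < i \<or> n < j \<Longrightarrow> Uf n a b v i j = 0" by (auto simp: Uf_def)
  show "\<And>i. i \<le> n \<Longrightarrow> Uf n a b v i 0 = 0 \<and> Uf n a b v 0 i = 0 \<and> Uf n a b v i n = i \<and> Uf n a b v n i = i"
    using assms by (auto simp: Uf_def min_def)
  show "\<And>i i' j. i \<le> i' \<Longrightarrow> i' \<le> n \<Longrightarrow> j \<le> n \<Longrightarrow> Uf n a b v i j \<le> Uf n a b v i' j \<and> Uf n a b v i' j \<le> Uf n a b v i j + (i' - i)"
  proof -
    fix i i' j assume h: "i \<le> i'" "i' \<le> n" "j \<le> n"
    obtain d where d: "i' = i + d" using h(1) le_Suc_ex by blast
    define p where "p = i - a"
    define p' where "p' = i + d - a"
    have k: "p \<le> p'" "p' \<le> p + d" unfolding p_def p'_def by arith+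
    show "Uf n a b v i j \<le> Uf n a b v i' j \<and> Uf n a b v i' j \<le> Uf n a b v i j + (i' - i)"
      using h k unfolding d Uf_def p_def[symmetric] p'_def[symmetric] by (auto simp: min_def)
  qed
  show "\<And>i j j'. j \<le> j' \<Longrightarrow> j' \<le> n \<Longrightarrow> i \<le> n \<Longrightarrow> Uf n a b v i j \<le> Uf n a b v i j' \<and> Uf n a b v i j' \<le> Uf n a b v i j + (j' - j)"
  proof -
    fix i j j' assume h: "j \<le> j'" "j' \<le> n" "i \<le> n"
    obtain d where d: "j' = j + d" using h(1) le_Suc_ex by blast
    define p where "p = j - b"
    define p' where "p' = j + d - b"
    have k: "p \<le> p'" "p' \<le> p + d" unfolding p_def p'_def by arith+
    show "Uf n a b v i j \<le> Uf n a b v i j' \<and> Uf n a b v i j' \<le> Uf n a b v i j + (j' - j)"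
      using h k unfolding d Uf_def p_def[symmetric] p'_def[symmetric] by (auto simp: min_def)
  qed
qed

lemma topf_eq: "topf n = Uf n n n n"
  by (auto simp: topf_def Uf_def min_def fun_eq_iff)

lemma topf_mem: "topf n \<in> IDQC n"
  unfolding topf_eq by (rule Uf_mem) simp

lemma pmin_mem: assumes "x \<in> IDQC n" "y \<in> IDQC n" shows "pmin x y \<in> IDQC n"
proof (rule IDQC_intro)
  note X = IDQC_D[OF assms(1)] and Y = IDQC_D[OF assms(2)]
  show "\<And>i j. n < i \<or> n < j \<Longrightarrow> pmin x y i j = 0" using X(1) Y(1) by (simp add: pmin_def)
  show "\<And>i. i \<le> n \<Longrightarrow> pmin x y i 0 = 0 \<and> pmin x y 0 i = 0 \<and> pmin x y i n = i \<and> pmin x y n i = i"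
    using X(2) Y(2) by (simp add: pmin_def)
  show "\<And>i i' j. i \<le> i' \<Longrightarrow> i' \<le> n \<Longrightarrow> j \<le> n \<Longrightarrow> pmin x y i j \<le> pmin x y i' j \<and> pmin x y i' j \<le> pmin x y i j + (i' - i)"
  proof -
    fix i i' j assume h: "i \<le> i'" "i' \<le> n" "j \<le> n"
    show "pmin x y i j \<le> pmin x y i' j \<and> pmin x y i' j \<le> pmin x y i j + (i' - i)"
      using X(3)[OF h] Y(3)[OF h] by (auto simp: pmin_def min_def)
  qed
  show "\<And>i j j'. j \<le> j' \<Longrightarrow> j' \<le> n \<Longrightarrow> i \<le> n \<Longrightarrow> pmin x y i j \<le> pmin x y i j' \<and> pmin x y i j' \<le> pmin x y i j + (j' - j)"
  proof -
    fix i j j' assume h: "j \<le> j'" "j' \<le> n" "i \<le> n"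
    show "pmin x y i j \<le> pmin x y i j' \<and> pmin x y i j' \<le> pmin x y i j + (j' - j)"
      using X(4)[OF h] Y(4)[OF h] by (auto simp: pmin_def min_def)
  qed
qed

lemma upper: assumes Q: "Q \<in> IDQC n" and ab: "a \<le> n" "b \<le> n" and v: "Q a b \<le> v"
  shows "qle n Q (Uf n a b v)"
  unfolding qle_def
proof (intro ballI)
  fix i j assume "i \<in> Ln n" "j \<in> Ln n"
  hence ij: "i \<le> n" "j \<le> n" by (auto simp: Ln_def)
  note D = IDQC_D[OF Q]
  have "Q i j \<le> Q i n" using D(4)[of j n i] ij by auto
  hence c1: "Q i j \<le> i" using D(2)[of i] ij by auto
  have "Q i j \<le> Q n j" using D(3)[of i n j] ij by auto
  hence c2: "Q i j \<le> j" using D(2)[of j] ij by auto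
  have s1: "Q i j \<le> Q (max i a) j" using D(3)[of i "max i a" j] ij ab by auto
  have s2: "Q (max i a) j \<le> Q a j + (max i a - a)" using D(3)[of a "max i a" j] ij ab by auto
  have s3: "Q a j \<le> Q a (max j b)" using D(4)[of j "max j b" a] ij ab by auto
  have s4: "Q a (max j b) \<le> Q a b + (max j b - b)" using D(4)[of b "max j b" a] ij ab by auto
  have m: "max i a - a = i - a" "max j b - b = j - b" by auto
  have c3: "Q i j \<le> v + (i - a) + (j - b)" using s1 s2 s3 s4 m v by linarith
  show "Q i j \<le> Uf n a b v i j" using c1 c2 c3 ij by (simp add: Uf_def)
qed

lemma antisym: assumes "P \<in> IDQC n" "Q \<in> IDQC n" "qle n P Q" "qle n Q P" shows "P = Q"
proof (intro ext)
  fix i j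
  show "P i j = Q i j"
  proof (cases "i \<le> n \<and> j \<le> n")
    case True thus ?thesis using assms(3,4) by (force simp: qle_def Ln_def)
  next
    case False thus ?thesis using IDQC_D(1)[OF assms(1)] IDQC_D(1)[OF assms(2)] by force
  qed
qed

lemma le_top: assumes "Q \<in> IDQC n" shows "qle n Q (topf n)"
proof -
  have "qle n Q (Uf n n n n)" using upper[OF assms, of n n n] IDQC_D(2)[OF assms, of n] by simp
  thus ?thesis by (simp add: topf_eq)
qed

lemma pmin_meet: assumes "x \<in> IDQC n" "y \<in> IDQC n" shows "is_meet n (pmin x y) x y"
  unfolding is_meet_def using pmin_mem[OF assms] by (auto simp: qle_def pmin_def)

lemma Uf_top: assumes "min a b \<le> v" shows "Uf n a b v = topf n"
proof -
  have "min i j \<le> v + (i - a) + (j - b)" for i j using assms by arith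
  hence "min i (min j (v + (i - a) + (j - b))) = min i j" for i j
    by (metis min.absorb2 min.assoc min.cobounded1 min.commute)
  thus ?thesis by (auto simp: Uf_def topf_def fun_eq_iff)
qed

lemma Uf_val: assumes "a \<le> n" "b \<le> n" "v \<le> min a b" shows "Uf n a b v a b = v"
  using assms by (auto simp: Uf_def)

definition TT :: "nat \<Rightarrow> (nat \<times> nat \<times> nat) set" where
  "TT n = {(a,b,v). a \<le> n \<and> b \<le> n \<and> a + b - n \<le> v \<and> v < min a b}"

lemma top_not_mi: "\<not> meet_irreducible n (topf n)"
  unfolding meet_irreducible_def using le_top by blast

lemma TT_mi: assumes "(a,b,v) \<in> TT n" shows "meet_irreducible n (Uf n a b v)"
proof -
  have h: "a \<le> n" "b \<le> n" "a + b \<le> v + n" "v < min a b" using assms by (auto simp: TT_def)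
  have mem: "Uf n a b v \<in> IDQC n" using Uf_mem h by auto
  have val: "Uf n a b v a b = v" using Uf_val h by auto
  have nt: "\<not> (\<forall>x\<in>IDQC n. qle n x (Uf n a b v))"
  proof
    assume "\<forall>x\<in>IDQC n. qle n x (Uf n a b v)"
    hence "qle n (topf n) (Uf n a b v)" using topf_mem by blast
    hence "topf n a b \<le> Uf n a b v a b" using h(1,2) unfolding qle_def Ln_def by auto
    hence "topf n a b \<le> v" using val by simp
    thus False using h by (simp add: topf_def)
  qed
  have irr: "Uf n a b v = x \<or> Uf n a b v = y" if xy: "x \<in> IDQC n" "y \<in> IDQC n" "is_meet n (Uf n a b v) x y" for x y
  proof -
    have "qle n (pmin x y) (Uf n a b v)" using xy pmin_mem[OF xy(1,2)] unfolding is_meet_def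
      by (auto simp: qle_def pmin_def)
    hence "pmin x y a b \<le> Uf n a b v a b" using h(1,2) unfolding qle_def Ln_def by auto
    hence "min (x a b) (y a b) \<le> v" using val by (simp add: pmin_def)
    hence "x a b \<le> v \<or> y a b \<le> v" by linarith
    moreover have "qle n (Uf n a b v) x" "qle n (Uf n a b v) y" using xy(3) by (auto simp: is_meet_def)
    ultimately show ?thesis using upper[OF xy(1) h(1,2)] upper[OF xy(2) h(1,2)] antisym mem xy(1,2) by metis
  qed
  show ?thesis unfolding meet_irreducible_def using mem nt irr by blast
qed

lemma TT_inj: "inj_on (\<lambda>(a,b,v). Uf n a b v) (TT n)"
proof (rule inj_onI)
  fix x y assume x: "x \<in> TT n" and y: "y \<in> TT n" and exy: "(\<lambda>(a,b,v). Uf n a b v) x = (\<lambda>(a,b,v). Uf n a b v) y"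
  obtain a b v where xe: "x = (a,b,v)" by (cases x) auto
  obtain a' b' v' where ye: "y = (a',b',v')" by (cases y) auto
  have t: "(a,b,v) \<in> TT n" "(a',b',v') \<in> TT n" using x y xe ye by auto
  have e: "Uf n a b v = Uf n a' b' v'" using exy xe ye by simp
  have h: "a \<le> n" "b \<le> n" "v < min a b" "a' \<le> n" "b' \<le> n" "v' < min a' b'" using t by (auto simp: TT_def)
  have e1: "v = Uf n a' b' v' a b" using e Uf_val[of a n b v] h by auto
  have e2: "v' = Uf n a b v a' b'" using e Uf_val[of a' n b' v'] h by auto
  have f1: "v = v' + (a - a') + (b - b')"
  proof -
    have "v = min a (min b (v' + (a - a') + (b - b')))" using e1 h by (simp add: Uf_def)
    thus ?thesis using h(3) by (simp add: min_def split: if_splits)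
  qed
  have f2: "v' = v + (a' - a) + (b' - b)"
  proof -
    have "v' = min a' (min b' (v + (a' - a) + (b' - b)))" using e2 h by (simp add: Uf_def)
    thus ?thesis using h(6) by (simp add: min_def split: if_splits)
  qed
  from f1 f2 have "a = a' \<and> b = b' \<and> v = v'" by arith
  thus "x = y" using xe ye by simp
qed




primrec gl :: "nat \<Rightarrow> (nat \<Rightarrow> nat \<Rightarrow> nat) \<Rightarrow> (nat \<times> nat) list \<Rightarrow> nat \<Rightarrow> nat \<Rightarrow> nat" where
  "gl n z [] = topf n"
| "gl n z (p # ps) = pmin (Uf n (fst p) (snd p) (z (fst p) (snd p))) (gl n z ps)"

lemma z_lower: assumes "z \<in> IDQC n" "a \<le> n" "b \<le> n" shows "a + b \<le> z a b + n"
proof -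
  have "z n b \<le> z a b + (n - a)" using IDQC_D(3)[OF assms(1), of a n b] assms by auto
  moreover have "z n b = b" using IDQC_D(2)[OF assms(1), of b] assms by auto
  ultimately show ?thesis using assms by linarith
qed

lemma z_upper: assumes "z \<in> IDQC n" "a \<le> n" "b \<le> n" shows "z a b \<le> min a b"
proof -
  have "z a b \<le> z a n" "z a b \<le> z n b" using IDQC_D(3)[OF assms(1), of a n b] IDQC_D(4)[OF assms(1), of b n a] assms by auto
  moreover have "z n b = b" "z a n = a" using IDQC_D(2)[OF assms(1), of b] IDQC_D(2)[OF assms(1), of a] assms by auto
  ultimately show ?thesis by simp
qed

lemma gl_props:
  assumes z: "z \<in> IDQC n" and ps: "\<forall>p\<in>set ps. fst p \<le> n \<and> snd p \<le> n"
  shows "gl n z ps \<in> IDQC n \<and> qle n z (gl n z ps)"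
  using ps
proof (induction ps)
  case Nil thus ?case using topf_mem le_top[OF z] by simp
next
  case (Cons p ps)
  obtain a b where p: "p = (a,b)" by (cases p)
  have ab: "a \<le> n" "b \<le> n" using Cons.prems p by auto
  have IH: "gl n z ps \<in> IDQC n" "qle n z (gl n z ps)" using Cons by auto
  have U: "Uf n a b (z a b) \<in> IDQC n" using Uf_mem z_lower[OF z ab] by auto
  have "qle n z (Uf n a b (z a b))" using upper[OF z ab] by simp
  hence "qle n z (pmin (Uf n a b (z a b)) (gl n z ps))" using IH(2) by (auto simp: qle_def pmin_def)
  thus ?case using pmin_mem[OF U IH(1)] p by simp
qed

lemma gl_le: assumes "p \<in> set ps" shows "gl n z ps i j \<le> Uf n (fst p) (snd p) (z (fst p) (snd p)) i j"
  using assms by (induction ps) (auto simp: pmin_def)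

lemma gl_mi:
  assumes mi: "meet_irreducible n z" and ps: "\<forall>p\<in>set ps. fst p \<le> n \<and> snd p \<le> n"
  and e: "gl n z ps = z"
  shows "\<exists>p\<in>set ps. z = Uf n (fst p) (snd p) (z (fst p) (snd p))"
  using ps e
proof (induction ps)
  case Nil thus ?case using mi top_not_mi by auto
next
  case (Cons p ps)
  have zI: "z \<in> IDQC n" using mi by (simp add: meet_irreducible_def)
  obtain a b where p: "p = (a,b)" by (cases p)
  have ab: "a \<le> n" "b \<le> n" using Cons.prems p by auto
  have G: "gl n z ps \<in> IDQC n" using gl_props[OF zI] Cons.prems by auto
  have U: "Uf n a b (z a b) \<in> IDQC n" using Uf_mem z_lower[OF zI ab] by auto
  have "is_meet n z (Uf n a b (z a b)) (gl n z ps)"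
    using pmin_meet[OF U G] Cons.prems(2) p by simp
  hence "z = Uf n a b (z a b) \<or> z = gl n z ps" using mi U G unfolding meet_irreducible_def by blast
  thus ?case
  proof
    assume "z = Uf n a b (z a b)" thus ?case using p by auto
  next
    assume "z = gl n z ps" thus ?case using Cons by auto
  qed
qed

lemma mi_char: assumes mi: "meet_irreducible n z" shows "z \<in> (\<lambda>(a,b,v). Uf n a b v) ` TT n"
proof -
  have zI: "z \<in> IDQC n" using mi by (simp add: meet_irreducible_def)
  define ps where "ps = List.product [0..<Suc n] [0..<Suc n]"
  have ps: "\<forall>p\<in>set ps. fst p \<le> n \<and> snd p \<le> n" by (auto simp: ps_def)
  have G: "gl n z ps \<in> IDQC n" "qle n z (gl n z ps)" using gl_props[OF zI ps] by auto
  have "qle n (gl n z ps) z" unfolding qle_def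
  proof (intro ballI)
    fix i j assume "i \<in> Ln n" "j \<in> Ln n"
    hence ij: "i \<le> n" "j \<le> n" by (auto simp: Ln_def)
    hence "(i,j) \<in> set ps" by (auto simp: ps_def)
    hence "gl n z ps i j \<le> Uf n i j (z i j) i j" using gl_le by fastforce
    also have "\<dots> = z i j" using Uf_val[OF ij z_upper[OF zI ij]] .
    finally show "gl n z ps i j \<le> z i j" .
  qed
  hence "gl n z ps = z" using antisym[OF G(1) zI] G(2) by blast
  then obtain p where p: "p \<in> set ps" "z = Uf n (fst p) (snd p) (z (fst p) (snd p))"
    using gl_mi[OF mi ps] by blast
  obtain a b where pe: "p = (a,b)" by (cases p)
  have ab: "a \<le> n" "b \<le> n" using p(1) ps pe by auto
  have ze: "z = Uf n a b (z a b)" using p(2) pe by simp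
  have "z a b < min a b"
  proof (rule ccontr)
    assume "\<not> z a b < min a b"
    hence "min a b \<le> z a b" by linarith
    hence "z = topf n" using ze Uf_top[of a b "z a b" n] by simp
    thus False using mi top_not_mi by simp
  qed
  moreover have "a + b - n \<le> z a b" using z_lower[OF zI ab] by simp
  ultimately have "(a,b,z a b) \<in> TT n" using ab by (simp add: TT_def)
  thus ?thesis using ze by force
qed

lemma mi_set: "{z. meet_irreducible n z} = (\<lambda>(a,b,v). Uf n a b v) ` TT n"
  using mi_char TT_mi by auto

lemma card_mi: "card {z. meet_irreducible n z} = card (TT n)"
  unfolding mi_set using card_image[OF TT_inj] .

lemma TT_sigma: "TT n = Sigma {0..n} (\<lambda>a. Sigma {0..n} (\<lambda>b. {a+b-n..<min a b}))"
  by (auto simp: TT_def)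

lemma card_TT: "card (TT n) = (\<Sum>a=0..n. \<Sum>b=0..n. min a b - (a + b - n))"
  unfolding TT_sigma by (simp add: card_SigmaI)




lemma sumW: "i \<le> n \<Longrightarrow> 2 * (\<Sum>j=1..n. int (i + j - n)) = int i * (int i + 1)"
proof (induction n arbitrary: i)
  case 0 thus ?case by simp
next
  case (Suc n)
  show ?case
  proof (cases i)
    case 0
    have "(\<Sum>j=1..Suc n. int (i + j - Suc n)) = 0" using 0 by (intro sum.neutral) auto
    thus ?thesis using 0 by simp
  next
    case (Suc i')
    have "(\<Sum>j=1..Suc n. int (i + j - Suc n)) = (\<Sum>j=1..n. int (i' + j - n)) + int (Suc i')"
      using Suc by (simp add: sum.cl_ivl_Suc)
    thus ?thesis using Suc.IH[of i'] Suc.prems \<open>i = Suc i'\<close> by (simp add: algebra_simps)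
  qed
qed

lemma sumM: "2 * (\<Sum>j=1..n. int (min i j)) = (if i \<le> n then int i * (int i + 1) + 2 * int i * (int n - int i) else int n * (int n + 1))"
proof (induction n)
  case 0 thus ?case by simp
next
  case (Suc n)
  have e: "(\<Sum>j=1..Suc n. int (min i j)) = (\<Sum>j=1..n. int (min i j)) + int (min i (Suc n))"
    by (simp add: sum.cl_ivl_Suc)
  show ?case
  proof (cases "i \<le> n")
    case True thus ?thesis using e Suc.IH by (simp add: algebra_simps)
  next
    case False
    show ?thesis
    proof (cases "i = Suc n")
      case True thus ?thesis using e Suc.IH False by (simp add: algebra_simps)
    next
      case False2: False
      thus ?thesis using e Suc.IH False by (simp add: algebra_simps)
    qed
  qed
qed

lemma s1: "2 * (\<Sum>i=1..n. int i) = int n * (int n + 1)"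
  by (induction n) (simp_all add: sum.cl_ivl_Suc algebra_simps)

lemma s2: "6 * (\<Sum>i=1..n. int i * int i) = int n * (int n + 1) * (2 * int n + 1)"
  by (induction n) (simp_all add: sum.cl_ivl_Suc algebra_simps)

lemma row: assumes "i \<le> n" shows "(\<Sum>j=1..n. int (min i j)) - (\<Sum>j=1..n. int (i + j - n)) = int i * (int n - int i)"
proof -
  have A: "2 * (\<Sum>j=1..n. int (min i j)) = int i * (int i + 1) + 2 * int i * (int n - int i)"
    using sumM[where n=n and i=i] by (simp only: if_P[OF assms])
  have B: "2 * (\<Sum>j=1..n. int (i + j - n)) = int i * (int i + 1)" using sumW[OF assms] .
  from A B show ?thesis by linarith
qed

lemma mqW: "mq n (Wn n) = (\<Sum>i=1..n. int i * (int n - int i))"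
proof -
  have "mq n (Wn n) = (\<Sum>i=1..n. (\<Sum>j=1..n. int (min i j)) - (\<Sum>j=1..n. int (i + j - n)))"
    unfolding mq_def qnorm_def Mn_def Wn_def by (simp add: sum_subtractf)
  also have "\<dots> = (\<Sum>i=1..n. int i * (int n - int i))"
    by (rule sum.cong[OF refl]) (rule row, simp)
  finally show ?thesis .
qed

lemma mqW6: "6 * mq n (Wn n) = (int n - 1) * int n * (int n + 1)"
proof -
  have "(\<Sum>i=1..n. int i * (int n - int i)) = int n * (\<Sum>i=1..n. int i) - (\<Sum>i=1..n. int i * int i)"
    by (simp add: algebra_simps sum_subtractf sum_distrib_left)
  hence "6 * (\<Sum>i=1..n. int i * (int n - int i)) = 3 * int n * (2 * (\<Sum>i=1..n. int i)) - 6 * (\<Sum>i=1..n. int i * int i)"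
    by (simp add: algebra_simps)
  also have "\<dots> = (int n - 1) * int n * (int n + 1)" unfolding s1 s2 by (simp add: algebra_simps)
  finally show ?thesis using mqW by simp
qed

lemma card_TT_int: "int (card (TT n)) = mq n (Wn n)"
proof -
  have "int (card (TT n)) = (\<Sum>a=0..n. \<Sum>b=0..n. int (min a b) - int (a + b - n))"
    unfolding card_TT of_nat_sum
    by (intro sum.cong refl) (auto simp: of_nat_diff)
  also have "\<dots> = (\<Sum>a=1..n. \<Sum>b=0..n. int (min a b) - int (a + b - n))"
    by (simp add: sum.atLeast_Suc_atMost)
  also have "\<dots> = (\<Sum>a=1..n. \<Sum>b=1..n. int (min a b) - int (a + b - n))"
  proof (rule sum.cong[OF refl])
    fix a assume "a \<in> {1..n}"
    hence a: "a \<le> n" by simp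
    have "(\<Sum>b=0..n. int (min a b) - int (a + b - n)) = (int (min a 0) - int (a + 0 - n)) + (\<Sum>b=Suc 0..n. int (min a b) - int (a + b - n))"
      by (rule sum.atLeast_Suc_atMost) simp
    also have "\<dots> = (\<Sum>b=1..n. int (min a b) - int (a + b - n))" using a by simp
    finally show "(\<Sum>b=0..n. int (min a b) - int (a + b - n)) = (\<Sum>b=1..n. int (min a b) - int (a + b - n))" .
  qed
  also have "\<dots> = mq n (Wn n)"
    unfolding mq_def qnorm_def Mn_def Wn_def by (simp add: sum_subtractf)
  finally show ?thesis .
qed

theorem mainTheorem12:
  fixes n :: nat
  assumes "n \<ge> 1"
  shows "6 * mq n (Wn n) = int ((n - 1) * n * (n + 1))
       \<and> mq n (Mn n) = 0
       \<and> 6 * int (card {z. meet_irreducible n z}) = int ((n - 1) * n * (n + 1))"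
proof -
  have r: "int ((n - 1) * n * (n + 1)) = (int n - 1) * int n * (int n + 1)"
  proof -
    obtain m where "n = Suc m" using assms by (cases n) auto
    thus ?thesis by (simp add: algebra_simps)
  qed
  have m0: "mq n (Mn n) = 0" by (simp add: mq_def)
  have c: "6 * int (card {z. meet_irreducible n z}) = 6 * mq n (Wn n)" using card_TT_int card_mi by simp
  have w: "6 * mq n (Wn n) = int ((n - 1) * n * (n + 1))" unfolding r by (rule mqW6)
  show ?thesis using w c m0 by simp
qed


end
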